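(* Let $(T,X)$ be a flow, where $T$ is a Hausdorff topological group and $X$ is a Hausdorff uniform space which is a Baire space. If $(T,X)$ is thickly stable and $x\in X$ is a regularly a.p. point, then $(T,\overline{Tx})$ is a pointwise regularly a.p. and equicontinuous subflow of $(T,X)$ (i.e. every point of $\overline{Tx}$ is a regularly a.p. point, and $(T,\overline{Tx})$ is equicontinuous).
   Context: $\mathscr U_X$ is a compatible symmetric uniformity of $X$; $\varepsilon[A]=\{y:\exists a\in A,(a,y)\in\varepsilon\}$. $S\subseteq T$ is (right) thick if for every compact $K\subseteq T$ there is $t$ with $Kt\subseteq S$; $A\subseteq T$ is (right) syndetic if there is compact $K$ with $Kt\cap A\neq\emptyset$ for all $t\in T$. A flow is thickly stable if for every $\varepsilon\in\mathscr U_X$ and $x\in X$ there exist $\delta\in\mathscr U_X$ and a thick $S\subseteq T$ with $s(\delta[x])\subseteq\varepsilon[sx]$ for all $s\in S$. A point $x$ is regularly a.p. if for every neighborhood $U$ of $x$ the set $\{t\in T: tx\in U\}$ contains a syndetic normal closed subgroup of $T$. A flow $(T,Z)$ is equicontinuous if for every $\varepsilon$ and $z\in Z$ there is $\delta$ with $t(\delta[z])\subseteq\varepsilon[tz]$ for all $t\in T$. *)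

theory Defs
  imports "HOL-Analysis.Analysis"
begin

text \<open>The group T is written additively (Isabelle class group_add, which is NOT
 assumed commutative). So the paper's product st is s + t, identity is 0,
 inverse is uminus.\<close>

definition sym_entourages :: "('a::uniform_space \<times> 'a) set set" where
  "sym_entourages = {E. eventually (\<lambda>p. p \<in> E) uniformity \<and> (\<forall>a b. (a,b) \<in> E \<longrightarrow> (b,a) \<in> E)}"

definition ent_img :: "('a \<times> 'a) set \<Rightarrow> 'a set \<Rightarrow> 'a set" where
  "ent_img E A = {y. \<exists>a\<in>A. (a, y) \<in> E}"

definition baire_space :: "'a::topological_space itself \<Rightarrow> bool" where
  "baire_space _ \<longleftrightarrow> (\<forall>\<G> :: 'a set set. countable \<G> \<and> (\<forall>U\<in>\<G>. open U \<and> closure U = UNIV)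
       \<longrightarrow> closure (\<Inter>\<G>) = UNIV)"

definition flow :: "('t::topological_group_add \<Rightarrow> 'x::topological_space \<Rightarrow> 'x) \<Rightarrow> bool" where
  "flow act \<longleftrightarrow> (\<forall>x. act 0 x = x) \<and> (\<forall>s t x. act (s + t) x = act s (act t x))
     \<and> continuous_on UNIV (\<lambda>p. act (fst p) (snd p))"

definition right_thick :: "'t::topological_group_add set \<Rightarrow> bool" where
  "right_thick S \<longleftrightarrow> (\<forall>K. compact K \<longrightarrow> (\<exists>t. (\<lambda>k. k + t) ` K \<subseteq> S))"

definition right_syndetic :: "'t::topological_group_add set \<Rightarrow> bool" where
  "right_syndetic A \<longleftrightarrow> (\<exists>K. compact K \<and> (\<forall>t. (\<lambda>k. k + t) ` K \<inter> A \<noteq> {}))"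

definition normal_closed_subgroup :: "'t::topological_group_add set \<Rightarrow> bool" where
  "normal_closed_subgroup H \<longleftrightarrow> 0 \<in> H \<and> (\<forall>a\<in>H. \<forall>b\<in>H. a + b \<in> H) \<and> (\<forall>a\<in>H. - a \<in> H)
     \<and> (\<forall>g. \<forall>h\<in>H. g + h + - g \<in> H) \<and> closed H"

definition thickly_stable :: "('t::topological_group_add \<Rightarrow> 'x::uniform_space \<Rightarrow> 'x) \<Rightarrow> bool" where
  "thickly_stable act \<longleftrightarrow> (\<forall>\<epsilon>\<in>sym_entourages. \<forall>x. \<exists>\<delta>\<in>sym_entourages. \<exists>S. right_thick S \<and>
      (\<forall>s\<in>S. act s ` ent_img \<delta> {x} \<subseteq> ent_img \<epsilon> {act s x}))"

definition regularly_ap :: "('t::topological_group_add \<Rightarrow> 'x::topological_space \<Rightarrow> 'x) \<Rightarrow> 'x \<Rightarrow> bool" where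
  "regularly_ap act x \<longleftrightarrow> (\<forall>U. (\<exists>V. open V \<and> x \<in> V \<and> V \<subseteq> U) \<longrightarrow>
      (\<exists>H. normal_closed_subgroup H \<and> right_syndetic H \<and> H \<subseteq> {t. act t x \<in> U}))"

definition equicontinuous_on :: "('t \<Rightarrow> 'x::uniform_space \<Rightarrow> 'x) \<Rightarrow> 'x set \<Rightarrow> bool" where
  "equicontinuous_on act Z \<longleftrightarrow> (\<forall>\<epsilon>\<in>sym_entourages. \<forall>z\<in>Z. \<exists>\<delta>\<in>sym_entourages. \<forall>t.
      act t ` (ent_img \<delta> {z} \<inter> Z) \<subseteq> ent_img \<epsilon> {act t z})"

end

theory Submission
  imports Defs
begin

lemma ent_refl: "E \<in> sym_entourages \<Longrightarrow> (a, a) \<in> E"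
  unfolding sym_entourages_def using uniformity_refl[of "\<lambda>p. p \<in> E"] by auto

lemma ent_sym: "E \<in> sym_entourages \<Longrightarrow> (a, b) \<in> E \<Longrightarrow> (b, a) \<in> E"
  unfolding sym_entourages_def by auto

lemma ent_half:
  assumes "(E::('a::uniform_space \<times> 'a) set) \<in> sym_entourages"
  shows "\<exists>D\<in>sym_entourages. \<forall>a b c. (a, b) \<in> D \<longrightarrow> (b, c) \<in> D \<longrightarrow> (a, c) \<in> E"
proof -
  from assms have "eventually (\<lambda>p. p \<in> E) uniformity" unfolding sym_entourages_def by auto
  then obtain D where D: "eventually D uniformity" "\<And>x y z. D (x, y) \<Longrightarrow> D (y, z) \<Longrightarrow> (x, z) \<in> E"
    by (rule uniformity_transE) auto
  define D' where "D' = {(a, b). D (a, b) \<and> D (b, a)}"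
  have "eventually (\<lambda>(x, y). D (y, x)) uniformity" using uniformity_sym[OF D(1)] .
  then have "eventually (\<lambda>p. p \<in> D') uniformity"
    using D(1) unfolding D'_def by (auto elim: eventually_elim2)
  then have "D' \<in> sym_entourages" unfolding sym_entourages_def D'_def by auto
  moreover have "\<forall>a b c. (a, b) \<in> D' \<longrightarrow> (b, c) \<in> D' \<longrightarrow> (a, c) \<in> E"
    using D(2) unfolding D'_def by auto
  ultimately show ?thesis by blast
qed

lemma ent_nhd:
  assumes "(E::('a::uniform_space \<times> 'a) set) \<in> sym_entourages"
  shows "\<exists>V. open V \<and> z \<in> V \<and> V \<subseteq> ent_img E {z}"
proof -
  from assms have "eventually (\<lambda>p. p \<in> E) uniformity" unfolding sym_entourages_def by auto
  then have "eventually (\<lambda>(x', y). x' = z \<longrightarrow> y \<in> ent_img E {z}) uniformity"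
    by (auto simp: ent_img_def elim: eventually_mono)
  then have "eventually (\<lambda>y. y \<in> ent_img E {z}) (nhds z)"
    by (simp add: eventually_nhds_uniformity)
  then show ?thesis unfolding eventually_nhds by auto
qed

lemma open_ent:
  assumes "open (V::'a::uniform_space set)" "z \<in> V"
  shows "\<exists>E\<in>sym_entourages. ent_img E {z} \<subseteq> V"
proof -
  have "eventually (\<lambda>y. y \<in> V) (nhds z)" using assms eventually_nhds by blast
  then have ev: "eventually (\<lambda>(x', y). x' = z \<longrightarrow> y \<in> V) uniformity"
    by (simp add: eventually_nhds_uniformity)
  define E where "E = {(a, b). (a = z \<longrightarrow> b \<in> V) \<and> (b = z \<longrightarrow> a \<in> V)}"
  have "eventually (\<lambda>(x, y). y = z \<longrightarrow> x \<in> V) uniformity"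
    using uniformity_sym[OF ev] by simp
  then have "eventually (\<lambda>p. p \<in> E) uniformity"
    using ev unfolding E_def by (auto elim: eventually_elim2)
  then have "E \<in> sym_entourages" unfolding sym_entourages_def E_def by auto
  moreover have "ent_img E {z} \<subseteq> V" unfolding ent_img_def E_def by auto
  ultimately show ?thesis by blast
qed

lemma closure_pt:
  assumes "z \<in> closure A" "open W" "z \<in> W"
  shows "\<exists>a\<in>A. a \<in> W"
  using assms closure_iff_nhds_not_empty by blast

lemma coset_lemma:
  fixes H S :: "'t::topological_group_add set"
  assumes "normal_closed_subgroup H" "right_syndetic H" "right_thick S"
  shows "\<exists>s\<in>S. \<exists>h\<in>H. t = h + s"
proof -
  obtain K where K: "compact K" "\<And>t. (\<lambda>k. k + t) ` K \<inter> H \<noteq> {}"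
    using assms(2) unfolding right_syndetic_def by blast
  have "compact (uminus ` K)"
    by (rule compact_continuous_image[OF _ K(1)]) (intro continuous_intros)
  then obtain t0 where t0: "(\<lambda>k. k + t0) ` (uminus ` K) \<subseteq> S"
    using assms(3) unfolding right_thick_def by blast
  obtain k where k: "k \<in> K" "k + (t + - t0) \<in> H" using K(2)[of "t + - t0"] by blast
  define s where "s = - k + t0"
  have sS: "s \<in> S" using t0 k(1) unfolding s_def by auto
  have "- k + (k + (t + - t0)) + - (- k) \<in> H"
    using assms(1) k(2) unfolding normal_closed_subgroup_def by blast
  moreover have "- k + (k + (t + - t0)) + - (- k) = t + - s"
    unfolding s_def by (simp add: minus_add add.assoc) (simp only: diff_conv_add_uminus add.assoc)
  ultimately have "t + - s \<in> H" by simp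
  moreover have "t = (t + - s) + s" by (simp add: add.assoc)
  ultimately show ?thesis using sS by blast
qed


lemma flow_cont:
  assumes "flow act"
  shows "continuous_on UNIV (act h)"
proof -
  have c: "continuous_on UNIV (\<lambda>p. act (fst p) (snd p))" using assms unfolding flow_def by auto
  have "continuous_on UNIV ((\<lambda>p. act (fst p) (snd p)) \<circ> (\<lambda>y. (h, y)))"
    by (rule continuous_on_compose[OF _ continuous_on_subset[OF c]]) (auto intro: continuous_intros)
  then show ?thesis by (simp add: o_def)
qed

lemma flow_vimage:
  assumes "flow act" "open V"
  shows "open (act h -` V)"
  using continuous_on_open_vimage[OF open_UNIV, of "act h"] flow_cont[OF assms(1)] assms(2) by auto

lemma flow_invariant:
  assumes "flow act" "z \<in> closure (range (\<lambda>t. act t x))"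
  shows "act t z \<in> closure (range (\<lambda>t. act t x))"
proof -
  have "act t ` range (\<lambda>t. act t x) \<subseteq> range (\<lambda>t. act t x)"
  proof
    fix y assume "y \<in> act t ` range (\<lambda>t. act t x)"
    then obtain u where "y = act t (act u x)" by auto
    then have "y = act (t + u) x" using assms(1) unfolding flow_def by auto
    then show "y \<in> range (\<lambda>t. act t x)" by auto
  qed
  then have "act t ` closure (range (\<lambda>t. act t x)) \<subseteq> closure (range (\<lambda>t. act t x))"
    using closure_subset[of "range (\<lambda>t. act t x)"]
    by (intro image_closure_subset continuous_on_subset[OF flow_cont[OF assms(1)]]) blast+
  then show ?thesis using assms(2) by auto
qed

lemma key_lemma:
  fixes act :: "'t::topological_group_add \<Rightarrow> 'x::uniform_space \<Rightarrow> 'x"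
  assumes fl: "flow act" and ts: "thickly_stable act" and rap: "regularly_ap act x"
    and eps: "\<epsilon> \<in> sym_entourages"
  shows "\<exists>H. normal_closed_subgroup H \<and> right_syndetic H \<and>
     (\<forall>z\<in>closure (range (\<lambda>t. act t x)). \<forall>h\<in>H. (z, act h z) \<in> \<epsilon>)"
proof -
  obtain e1 where e1: "e1 \<in> sym_entourages" "\<And>a b c. (a, b) \<in> e1 \<Longrightarrow> (b, c) \<in> e1 \<Longrightarrow> (a, c) \<in> \<epsilon>"
    using ent_half[OF eps] by blast
  obtain e2 where e2: "e2 \<in> sym_entourages" "\<And>a b c. (a, b) \<in> e2 \<Longrightarrow> (b, c) \<in> e2 \<Longrightarrow> (a, c) \<in> e1"
    using ent_half[OF e1(1)] by blast
  obtain \<delta> S where dS: "\<delta> \<in> sym_entourages" "right_thick S"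
    "\<And>s. s \<in> S \<Longrightarrow> act s ` ent_img \<delta> {x} \<subseteq> ent_img e2 {act s x}"
    using ts e2(1) unfolding thickly_stable_def by (metis (no_types, lifting))
  obtain V where V: "open V" "x \<in> V" "V \<subseteq> ent_img \<delta> {x}" using ent_nhd[OF dS(1)] by blast
  obtain H where H: "normal_closed_subgroup H" "right_syndetic H" "H \<subseteq> {t. act t x \<in> ent_img \<delta> {x}}"
  proof -
    have "\<exists>V. open V \<and> x \<in> V \<and> V \<subseteq> ent_img \<delta> {x}" using V by blast
    then show ?thesis using that rap unfolding regularly_ap_def by blast
  qed
  have addact: "act (a + b) y = act a (act b y)" for a b y using fl unfolding flow_def by auto
  have sub: "(act s x, act (g + s) x) \<in> e2" if "s \<in> S" "g \<in> H" for s g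
  proof -
    have "- s + g + - (- s) \<in> H" using H(1) that(2) unfolding normal_closed_subgroup_def by blast
    then have g': "- s + g + s \<in> H" by simp
    have "g + s = s + (- s + g + s)" by (simp add: add.assoc)
    then have "act (g + s) x = act s (act (- s + g + s) x)" using addact by metis
    moreover have "act (- s + g + s) x \<in> ent_img \<delta> {x}" using H(3) g' by auto
    ultimately have "act (g + s) x \<in> ent_img e2 {act s x}" using dS(3)[OF that(1)] by auto
    then show ?thesis unfolding ent_img_def by auto
  qed
  have "\<forall>z\<in>closure (range (\<lambda>t. act t x)). \<forall>h\<in>H. (z, act h z) \<in> \<epsilon>"
  proof (intro ballI)
    fix z h assume z: "z \<in> closure (range (\<lambda>t. act t x))" and h: "h \<in> H"
    obtain W where W: "open W" "z \<in> W" "W \<subseteq> ent_img e2 {z}" using ent_nhd[OF e2(1)] by blast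
    obtain W' where W': "open W'" "act h z \<in> W'" "W' \<subseteq> ent_img e2 {act h z}" using ent_nhd[OF e2(1)] by blast
    have "open (W \<inter> act h -` W')" using W(1) flow_vimage[OF fl W'(1)] by auto
    then obtain t where t: "act t x \<in> W" "act h (act t x) \<in> W'"
      using closure_pt[OF z, of "W \<inter> act h -` W'"] W(2) W'(2) by auto
    have 1: "(z, act t x) \<in> e2" using t(1) W(3) unfolding ent_img_def by auto
    have 2: "(act h z, act h (act t x)) \<in> e2" using t(2) W'(3) unfolding ent_img_def by auto
    obtain s h1 where sh: "s \<in> S" "h1 \<in> H" "t = h1 + s" using coset_lemma[OF H(1) H(2) dS(2)] by blast
    have "(act s x, act t x) \<in> e2" using sub[OF sh(1) sh(2)] sh(3) by simp
    then have 3: "(act t x, act s x) \<in> e2" using ent_sym[OF e2(1)] by blast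
    have hh: "h + h1 \<in> H" using H(1) h sh(2) unfolding normal_closed_subgroup_def by blast
    have "act h (act t x) = act ((h + h1) + s) x" using addact sh(3) by (simp add: add.assoc)
    then have 4: "(act s x, act h (act t x)) \<in> e2" using sub[OF sh(1) hh] by simp
    have 5: "(act h (act t x), act h z) \<in> e2" using 2 ent_sym[OF e2(1)] by blast
    have "(z, act s x) \<in> e1" using e2(2)[OF 1 3] .
    moreover have "(act s x, act h z) \<in> e1" using e2(2)[OF 4 5] .
    ultimately show "(z, act h z) \<in> \<epsilon>" using e1(2) by blast
  qed
  then show ?thesis using H by blast
qed


theorem theorem2p6:
  fixes act :: "'t::{topological_group_add, t2_space} \<Rightarrow> 'x::{uniform_space, t2_space} \<Rightarrow> 'x"
    and x :: 'x
  assumes "flow act"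
    and "baire_space TYPE('x)"
    and "thickly_stable act"
    and "regularly_ap act x"
  shows "(\<forall>t. \<forall>z\<in>closure (range (\<lambda>t. act t x)). act t z \<in> closure (range (\<lambda>t. act t x)))
    \<and> (\<forall>z\<in>closure (range (\<lambda>t. act t x)). regularly_ap act z)
    \<and> equicontinuous_on act (closure (range (\<lambda>t. act t x)))"
proof -
  note fl = assms(1) and ts = assms(3) and rap = assms(4)
  define Z where "Z = closure (range (\<lambda>t. act t x))"
  have inv: "\<And>t z. z \<in> Z \<Longrightarrow> act t z \<in> Z" unfolding Z_def using flow_invariant[OF fl] by blast
  have addact: "act (a + b) y = act a (act b y)" for a b y using fl unfolding flow_def by auto
  have P2: "regularly_ap act z" if z: "z \<in> Z" for z
    unfolding regularly_ap_def
  proof (intro allI impI)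
    fix U assume "\<exists>V. open V \<and> z \<in> V \<and> V \<subseteq> U"
    then obtain V where V: "open V" "z \<in> V" "V \<subseteq> U" by blast
    obtain E where E: "E \<in> sym_entourages" "ent_img E {z} \<subseteq> V" using open_ent[OF V(1,2)] by blast
    obtain H where H: "normal_closed_subgroup H" "right_syndetic H"
      "\<And>w h. w \<in> Z \<Longrightarrow> h \<in> H \<Longrightarrow> (w, act h w) \<in> E"
      using key_lemma[OF fl ts rap E(1)] unfolding Z_def by blast
    have "H \<subseteq> {t. act t z \<in> U}"
    proof
      fix h assume "h \<in> H"
      then have "act h z \<in> ent_img E {z}" using H(3)[OF z] unfolding ent_img_def by auto
      then show "h \<in> {t. act t z \<in> U}" using E(2) V(3) by auto
    qed
    then show "\<exists>H. normal_closed_subgroup H \<and> right_syndetic H \<and> H \<subseteq> {t. act t z \<in> U}"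
      using H(1,2) by blast
  qed
  have P3: "equicontinuous_on act Z"
    unfolding equicontinuous_on_def
  proof (intro ballI)
    fix \<epsilon> :: "('x \<times> 'x) set" and z assume eps: "\<epsilon> \<in> sym_entourages" and z: "z \<in> Z"
    obtain e1 where e1: "e1 \<in> sym_entourages" "\<And>a b c. (a, b) \<in> e1 \<Longrightarrow> (b, c) \<in> e1 \<Longrightarrow> (a, c) \<in> \<epsilon>"
      using ent_half[OF eps] by blast
    obtain e2 where e2: "e2 \<in> sym_entourages" "\<And>a b c. (a, b) \<in> e2 \<Longrightarrow> (b, c) \<in> e2 \<Longrightarrow> (a, c) \<in> e1"
      using ent_half[OF e1(1)] by blast
    have e21: "(a, b) \<in> e2 \<Longrightarrow> (a, b) \<in> e1" for a b using e2(2) ent_refl[OF e2(1)] by blast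
    obtain \<delta> S where dS: "\<delta> \<in> sym_entourages" "right_thick S"
      "\<And>s. s \<in> S \<Longrightarrow> act s ` ent_img \<delta> {z} \<subseteq> ent_img e2 {act s z}"
      using ts e2(1) unfolding thickly_stable_def by (metis (no_types, lifting))
    obtain H where H: "normal_closed_subgroup H" "right_syndetic H"
      "\<And>w h. w \<in> Z \<Longrightarrow> h \<in> H \<Longrightarrow> (w, act h w) \<in> e2"
      using key_lemma[OF fl ts rap e2(1)] unfolding Z_def by blast
    have "\<forall>t. act t ` (ent_img \<delta> {z} \<inter> Z) \<subseteq> ent_img \<epsilon> {act t z}"
    proof (intro allI subsetI)
      fix t w assume "w \<in> act t ` (ent_img \<delta> {z} \<inter> Z)"
      then obtain y where y: "y \<in> ent_img \<delta> {z}" "y \<in> Z" "w = act t y" by auto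
      obtain s h where sh: "s \<in> S" "h \<in> H" "t = h + s" using coset_lemma[OF H(1) H(2) dS(2)] by blast
      have "act s y \<in> ent_img e2 {act s z}" using dS(3)[OF sh(1)] y(1) by auto
      then have 1: "(act s z, act s y) \<in> e2" unfolding ent_img_def by auto
      have 2: "(act s y, act h (act s y)) \<in> e2" using H(3)[OF inv[OF y(2)] sh(2)] .
      have "(act s z, act h (act s z)) \<in> e2" using H(3)[OF inv[OF z] sh(2)] .
      then have 3: "(act h (act s z), act s z) \<in> e2" using ent_sym[OF e2(1)] by blast
      have "(act h (act s z), act s y) \<in> e1" using e2(2)[OF 3 1] .
      then have "(act h (act s z), act h (act s y)) \<in> \<epsilon>" using e1(2) e21[OF 2] by blast
      then show "w \<in> ent_img \<epsilon> {act t z}" using y(3) sh(3) addact unfolding ent_img_def by auto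
    qed
    then show "\<exists>\<delta>\<in>sym_entourages. \<forall>t. act t ` (ent_img \<delta> {z} \<inter> Z) \<subseteq> ent_img \<epsilon> {act t z}"
      using dS(1) by blast
  qed
  show ?thesis using inv P2 P3 unfolding Z_def by blast
qed

end
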